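(* Let $m\ge 3$ and let $WC_m$ denote the fully whiskered $2m$-cycle graph. Then $M_2(WC_m)\simeq S^{2m-1}$.
   Context: The fully whiskered graph of a graph $G$ is obtained by attaching a leaf (a new vertex joined by one edge) to every vertex of $G$; $WC_m$ is the fully whiskered graph of the cycle on $2m$ vertices. A $2$-matching of a graph is a set of edges such that every vertex has degree at most $2$ in it. $M_2(G)$ is the simplicial complex whose vertices are the edges of $G$ and whose faces are the $2$-matchings of $G$. *)

theory Defs
  imports "HOL-Analysis.Analysis"
begin

text \<open>Simple graphs are given by their edge sets; an edge is a 2-element set of vertices.\<close>

text \<open>The fully whiskered 2m-cycle WC_m: cycle vertices (i, False) for i < 2m, with edges
  {(i,False), ((i+1) mod 2m, False)}, and leaves (i, True) attached by edges {(i,False),(i,True)}.\<close>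
definition whiskered_cycle_edges :: "nat \<Rightarrow> (nat \<times> bool) set set" where
  "whiskered_cycle_edges m =
     {{(i, False), ((i + 1) mod (2 * m), False)} | i. i < 2 * m}
   \<union> {{(i, False), (i, True)} | i. i < 2 * m}"

definition two_matching :: "'v set set \<Rightarrow> 'v set set \<Rightarrow> bool" where
  "two_matching G F \<longleftrightarrow> F \<subseteq> G \<and> (\<forall>v. card {e \<in> F. v \<in> e} \<le> 2)"

definition two_matching_complex :: "'v set set \<Rightarrow> 'v set set set" where
  "two_matching_complex G = {F. two_matching G F}"

text \<open>Geometric realization of a (finite) abstract simplicial complex K (given as its set of
  faces) as a subspace of the product space of real-valued functions on vertices:
  the points are the convex combinations of vertices whose support is a face.\<close>
definition geometric_realization :: "'a set set \<Rightarrow> ('a \<Rightarrow> real) topology" where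
  "geometric_realization K =
     subtopology (powertop_real UNIV)
       {f. (\<forall>v. 0 \<le> f v) \<and> {v. f v \<noteq> 0} \<in> K \<and> (\<Sum>v\<in>{v. f v \<noteq> 0}. f v) = 1}"

end

theory Submission
  imports Defs
begin


locale wc = fixes m :: nat assumes m3: "3 \<le> m"
begin

definition cE :: "nat \<Rightarrow> (nat \<times> bool) set" where
  "cE k = {(k, False), ((k + 1) mod (2 * m), False)}"
definition wE :: "nat \<Rightarrow> (nat \<times> bool) set" where
  "wE k = {(k, False), (k, True)}"
definition pr :: "nat \<Rightarrow> nat" where
  "pr j = (if j = 0 then 2 * m - 1 else j - 1)"
definition sc :: "nat \<Rightarrow> nat" where
  "sc j = (if j + 1 = 2 * m then 0 else j + 1)"

lemma mod_sc: "k < 2 * m \<Longrightarrow> Suc k mod (2 * m) = sc k"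
  unfolding sc_def by (auto simp: mod_if)

lemma sc_lt: "k < 2 * m \<Longrightarrow> sc k < 2 * m" using m3 unfolding sc_def by auto
lemma pr_lt: "k < 2 * m \<Longrightarrow> pr k < 2 * m" using m3 unfolding pr_def by auto
lemma sc_pr: "k < 2 * m \<Longrightarrow> sc (pr k) = k" using m3 unfolding sc_def pr_def by auto

lemma cE_sc: "k < 2 * m \<Longrightarrow> cE k = {(k, False), (sc k, False)}"
  by (simp add: cE_def mod_sc)

lemma V_eq: "whiskered_cycle_edges m = cE ` {..<2*m} \<union> wE ` {..<2*m}"
  unfolding whiskered_cycle_edges_def cE_def wE_def by auto

lemma cE_inj: "i < 2*m \<Longrightarrow> j < 2*m \<Longrightarrow> cE i = cE j \<longleftrightarrow> i = j"
proof
  assume i: "i < 2*m" and j: "j < 2*m" and e: "cE i = cE j"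
  have "(i, False) \<in> cE j" "(j, False) \<in> cE i" using e by (auto simp: cE_def)
  then have "i = j \<or> i = sc j" "j = i \<or> j = sc i" using i j by (auto simp: cE_sc)
  then show "i = j" using i j m3 unfolding sc_def by (auto split: if_splits)
qed simp

lemma wE_inj: "wE i = wE j \<longleftrightarrow> i = j"
  unfolding wE_def by auto

lemma cE_wE: "cE i \<noteq> wE j"
  unfolding cE_def wE_def by auto

lemma pr_neq: "j < 2*m \<Longrightarrow> pr j \<noteq> j" using m3 unfolding pr_def by auto

lemma incid_F: assumes "j < 2*m"
  shows "{e \<in> whiskered_cycle_edges m. (j, False) \<in> e} = {cE (pr j), cE j, wE j}"
proof -
  have "(j, False) \<in> cE k \<longleftrightarrow> k = j \<or> k = pr j" if "k < 2*m" for k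
    using that assms m3 by (auto simp: cE_sc sc_def pr_def)
  then show ?thesis using assms pr_lt[OF assms] unfolding V_eq by (auto simp: wE_def)
qed

lemma incid_T: "{e \<in> whiskered_cycle_edges m. (j, True) \<in> e} \<subseteq> {wE j}"
  unfolding V_eq by (auto simp: wE_def cE_def)

lemma incid_other: "j \<ge> 2*m \<Longrightarrow> {e \<in> whiskered_cycle_edges m. (j, b) \<in> e} = {}"
  unfolding V_eq using m3 by (auto simp: wE_def cE_sc sc_def split: if_splits)

lemma card3: assumes "x \<noteq> y" "x \<noteq> z" "y \<noteq> z"
  shows "card (F \<inter> {x, y, z}) \<le> 2 \<longleftrightarrow> \<not> (x \<in> F \<and> y \<in> F \<and> z \<in> F)"
proof
  assume c: "card (F \<inter> {x, y, z}) \<le> 2"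
  show "\<not> (x \<in> F \<and> y \<in> F \<and> z \<in> F)"
  proof
    assume "x \<in> F \<and> y \<in> F \<and> z \<in> F"
    then have "F \<inter> {x,y,z} = {x,y,z}" by auto
    with c assms show False by simp
  qed
next
  assume "\<not> (x \<in> F \<and> y \<in> F \<and> z \<in> F)"
  then have "F \<inter> {x,y,z} \<subseteq> {y,z} \<or> F \<inter> {x,y,z} \<subseteq> {x,z} \<or> F \<inter> {x,y,z} \<subseteq> {x,y}" by auto
  moreover have "card {a, b} \<le> 2" for a b :: 'a by (simp add: card_insert_if)
  ultimately show "card (F \<inter> {x, y, z}) \<le> 2"
    by (metis card_mono finite.emptyI finite.insertI le_trans)
qed

lemma two_matching_iff:
  assumes F: "F \<subseteq> whiskered_cycle_edges m"
  shows "two_matching (whiskered_cycle_edges m) F \<longleftrightarrow>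
         (\<forall>j<2*m. \<not> (cE (pr j) \<in> F \<and> cE j \<in> F \<and> wE j \<in> F))"
proof -
  have eq: "{e \<in> F. v \<in> e} = F \<inter> {e \<in> whiskered_cycle_edges m. v \<in> e}" for v
    using F by auto
  have "(\<forall>v. card {e \<in> F. v \<in> e} \<le> 2) \<longleftrightarrow> (\<forall>j<2*m. \<not> (cE (pr j) \<in> F \<and> cE j \<in> F \<and> wE j \<in> F))"
  proof safe
    fix j assume A: "\<forall>v. card {e \<in> F. v \<in> e} \<le> 2" and j: "j < 2*m"
      and B: "cE (pr j) \<in> F" "cE j \<in> F" "wE j \<in> F"
    have "card (F \<inter> {cE (pr j), cE j, wE j}) \<le> 2" using A[rule_format, of "(j,False)"]
      by (simp only: eq incid_F[OF j])
    then show False using card3[of "cE (pr j)" "cE j" "wE j" F] B j pr_lt[OF j] pr_neq[OF j]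
      by (simp add: cE_inj cE_wE)
  next
    fix v :: "nat \<times> bool"
    assume A: "\<forall>j<2*m. \<not> (cE (pr j) \<in> F \<and> cE j \<in> F \<and> wE j \<in> F)"
    obtain j b where v: "v = (j, b)" by fastforce
    show "card {e \<in> F. v \<in> e} \<le> 2"
    proof (cases "j < 2*m")
      case j: True
      show ?thesis
      proof (cases b)
        case True
        have "card {e \<in> F. v \<in> e} \<le> card {wE j}"
          by (rule card_mono) (use incid_T[of j] v True eq in auto)
        then show ?thesis by simp
      next
        case False
        have "card (F \<inter> {cE (pr j), cE j, wE j}) \<le> 2"
          using card3[of "cE (pr j)" "cE j" "wE j" F] A j pr_lt[OF j] pr_neq[OF j]
          by (simp add: cE_inj cE_wE)
        then show ?thesis by (simp only: v False eq incid_F[OF j])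
      qed
    next
      case False
      then show ?thesis by (simp only: v eq incid_other) simp
    qed
  qed
  then show ?thesis using F unfolding two_matching_def by auto
qed

definition VV where "VV = whiskered_cycle_edges m"
definition XX where "XX = geometric_realization (two_matching_complex VV)"

lemma finite_VV: "finite VV" unfolding VV_def V_eq by simp

lemma topspace_XX: "topspace XX =
  {f. (\<forall>v. 0 \<le> f v) \<and> {v. f v \<noteq> 0} \<in> two_matching_complex VV \<and> (\<Sum>v\<in>{v. f v \<noteq> 0}. f v) = 1}"
  unfolding XX_def geometric_realization_def by simp

lemma sum_VV: "sum f VV = (\<Sum>k<2*m. f (cE k) + f (wE k))"
proof -
  have d: "cE ` {..<2*m} \<inter> wE ` {..<2*m} = {}" using cE_wE by blast
  have "sum f VV = sum f (cE ` {..<2*m}) + sum f (wE ` {..<2*m})"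
    unfolding VV_def V_eq by (rule sum.union_disjoint) (use d in auto)
  also have "sum f (cE ` {..<2*m}) = (\<Sum>k<2*m. f (cE k))"
    by (rule sum.reindex_cong[where l=cE]) (auto simp: inj_on_def cE_inj)
  also have "sum f (wE ` {..<2*m}) = (\<Sum>k<2*m. f (wE k))"
    by (rule sum.reindex_cong[where l=wE]) (auto simp: inj_on_def wE_inj)
  finally show ?thesis by (simp add: sum.distrib)
qed

definition inK :: "((nat \<times> bool) set \<Rightarrow> real) \<Rightarrow> bool" where
  "inK f \<longleftrightarrow> (\<forall>e. e \<notin> VV \<longrightarrow> f e = 0) \<and> (\<forall>k<2*m. 0 \<le> f (cE k) \<and> 0 \<le> f (wE k)) \<and>
     (\<Sum>k<2*m. f (cE k) + f (wE k)) = 1 \<and>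
     (\<forall>j<2*m. f (cE (pr j)) = 0 \<or> f (cE j) = 0 \<or> f (wE j) = 0)"

lemma VV_cases: "e \<in> VV \<Longrightarrow> (\<exists>k<2*m. e = cE k) \<or> (\<exists>k<2*m. e = wE k)"
  unfolding VV_def V_eq by auto

lemma cE_VV: "k < 2*m \<Longrightarrow> cE k \<in> VV" and wE_VV: "k < 2*m \<Longrightarrow> wE k \<in> VV"
  unfolding VV_def V_eq by auto

lemma topspace_XX_iff: "f \<in> topspace XX \<longleftrightarrow> inK f"
proof
  assume f: "f \<in> topspace XX"
  let ?S = "{v. f v \<noteq> 0}"
  have nn: "\<forall>v. 0 \<le> f v" and tm: "two_matching VV ?S" and s1: "sum f ?S = 1"
    using f unfolding topspace_XX two_matching_complex_def by auto
  have sub: "?S \<subseteq> VV" using tm unfolding two_matching_def by auto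
  have out: "\<forall>e. e \<notin> VV \<longrightarrow> f e = 0" using sub by auto
  have "sum f VV = sum f ?S"
    by (rule sum.mono_neutral_right) (use finite_VV sub in auto)
  then have s: "(\<Sum>k<2*m. f (cE k) + f (wE k)) = 1" using s1 sum_VV[of f] by simp
  have z: "\<forall>j<2*m. f (cE (pr j)) = 0 \<or> f (cE j) = 0 \<or> f (wE j) = 0"
    using tm sub two_matching_iff unfolding VV_def by auto
  show "inK f" unfolding inK_def using out nn s z by auto
next
  assume f: "inK f"
  let ?S = "{v. f v \<noteq> 0}"
  have out: "\<And>e. e \<notin> VV \<Longrightarrow> f e = 0" using f unfolding inK_def by auto
  have nn: "\<forall>v. 0 \<le> f v"
  proof
    fix v show "0 \<le> f v"
    proof (cases "v \<in> VV")
      case True then show ?thesis using VV_cases[OF True] f unfolding inK_def by auto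
    qed (simp add: out)
  qed
  have sub: "?S \<subseteq> VV" using out by auto
  have "sum f VV = sum f ?S"
    by (rule sum.mono_neutral_right) (use finite_VV sub in auto)
  then have s1: "sum f ?S = 1" using f sum_VV[of f] unfolding inK_def by simp
  have tm: "two_matching VV ?S"
    using two_matching_iff[of ?S] sub f unfolding VV_def inK_def by auto
  show "f \<in> topspace XX" unfolding topspace_XX two_matching_complex_def using nn tm s1 by auto
qed

definition mk :: "(nat \<Rightarrow> real) \<Rightarrow> (nat \<Rightarrow> real) \<Rightarrow> (nat \<times> bool) set \<Rightarrow> real" where
  "mk a b e = (if \<exists>k<2*m. e = cE k then a (THE k. k < 2*m \<and> e = cE k)
               else if \<exists>k<2*m. e = wE k then b (THE k. k < 2*m \<and> e = wE k) else 0)"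

lemma mk_cE: "k < 2*m \<Longrightarrow> mk a b (cE k) = a k"
proof -
  assume k: "k < 2*m"
  have "(THE i. i < 2*m \<and> cE k = cE i) = k"
    by (rule the_equality) (use k cE_inj in auto)
  then show ?thesis using k unfolding mk_def by auto
qed

lemma mk_wE: "k < 2*m \<Longrightarrow> mk a b (wE k) = b k"
proof -
  assume k: "k < 2*m"
  have "(THE i. i < 2*m \<and> wE k = wE i) = k"
    by (rule the_equality) (use k wE_inj in auto)
  then show ?thesis using k cE_wE unfolding mk_def by (auto simp: eq_commute[of "wE k"])
qed

lemma mk_out: "e \<notin> VV \<Longrightarrow> mk a b e = 0"
  unfolding mk_def using cE_VV wE_VV by auto

lemma mk_cases: "(\<exists>k<2*m. \<forall>a b. mk a b e = a k) \<or> (\<exists>k<2*m. \<forall>a b. mk a b e = b k) \<or> (\<forall>a b. mk a b e = 0)"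
proof (cases "e \<in> VV")
  case True
  then show ?thesis using VV_cases[OF True] mk_cE mk_wE by blast
qed (simp add: mk_out)

definition Zc :: "(nat \<Rightarrow> real) \<Rightarrow> (nat \<Rightarrow> real) \<Rightarrow> bool" where
  "Zc a b \<longleftrightarrow> (\<forall>j<2*m. a (pr j) = 0 \<or> a j = 0 \<or> b j = 0)"

definition NN :: "(nat \<Rightarrow> real) \<Rightarrow> (nat \<Rightarrow> real) \<Rightarrow> bool" where
  "NN a b \<longleftrightarrow> (\<forall>k<2*m. 0 \<le> a k \<and> 0 \<le> b k)"

lemma sum_mk: "(\<Sum>k<2*m. mk a b (cE k) + mk a b (wE k)) = (\<Sum>k<2*m. a k + b k)"
  by (rule sum.cong) (auto simp: mk_cE mk_wE)

lemma inK_mk: "inK (mk a b) \<longleftrightarrow> NN a b \<and> (\<Sum>k<2*m. a k + b k) = 1 \<and> Zc a b"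
  unfolding inK_def NN_def Zc_def sum_mk using pr_lt
  by (auto simp: mk_cE mk_wE mk_out)

lemma inK_eq_mk: "inK f \<Longrightarrow> f = mk (\<lambda>k. f (cE k)) (\<lambda>k. f (wE k))"
proof
  fix e assume f: "inK f"
  show "f e = mk (\<lambda>k. f (cE k)) (\<lambda>k. f (wE k)) e"
  proof (cases "e \<in> VV")
    case True
    then show ?thesis using VV_cases[OF True] by (auto simp: mk_cE mk_wE)
  next
    case False
    then show ?thesis using f by (simp add: mk_out inK_def)
  qed
qed

lemma inK_coords: "inK f \<Longrightarrow> NN (\<lambda>k. f (cE k)) (\<lambda>k. f (wE k)) \<and>
   (\<Sum>k<2*m. f (cE k) + f (wE k)) = 1 \<and> Zc (\<lambda>k. f (cE k)) (\<lambda>k. f (wE k))"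
  unfolding inK_def NN_def Zc_def by auto

definition lam0 :: "(nat \<Rightarrow> real) \<Rightarrow> (nat \<Rightarrow> real) \<Rightarrow> real" where
  "lam0 a b = min (b 0) (min (a (2*m-1)) (a 0))"

primrec lam :: "(nat \<Rightarrow> real) \<Rightarrow> (nat \<Rightarrow> real) \<Rightarrow> nat \<Rightarrow> real" where
  "lam a b 0 = lam0 a b"
| "lam a b (Suc j) = min (b (Suc j)) (min (a j - lam a b j)
      (a (Suc j) - (if Suc j = 2*m-1 then lam0 a b else 0)))"

lemma lam_Suc': "lam a b (Suc j) = min (b (Suc j)) (min (a j - lam a b j)
      (a (Suc j) - (if Suc j = 2*m-1 then lam a b 0 else 0)))" by simp

lemma lam_0': "lam a b 0 = min (b 0) (min (a (2*m-1)) (a 0))" by (simp add: lam0_def)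

declare lam.simps[simp del]


definition Ap where "Ap a b k = a k - lam a b k - lam a b (sc k)"
definition Bp where "Bp a b k = b k - lam a b k"
definition phi :: "(nat \<Rightarrow> real) \<Rightarrow> (nat \<Rightarrow> real) \<Rightarrow> nat \<Rightarrow> real" where
  "phi a b k = (if k < 2*m then a k - b k - b (sc k) else 0)"

lemma lam_bounds: assumes "NN a b"
  shows "j < 2*m \<Longrightarrow> 0 \<le> lam a b j \<and> lam a b j \<le> b j \<and>
           lam a b j \<le> a j - (if j = 2*m-1 then lam a b 0 else 0)"
proof (induction j)
  case 0
  then show ?case using assms m3 unfolding NN_def lam_0' by auto
next
  case (Suc j)
  have h: "lam a b 0 \<le> a (2*m-1)" by (simp add: lam_0')
  have "0 \<le> a (Suc j) - (if Suc j = 2*m-1 then lam a b 0 else 0)"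
    using h assms Suc.prems unfolding NN_def by auto
  moreover have "0 \<le> a j - lam a b j" using Suc by (auto split: if_splits)
  moreover have "0 \<le> b (Suc j)" using assms Suc.prems unfolding NN_def by auto
  ultimately show ?case unfolding lam_Suc' by auto
qed

lemma lam_nn: "NN a b \<Longrightarrow> j < 2*m \<Longrightarrow> 0 \<le> lam a b j"
  using lam_bounds by blast

lemma sc_cases: "k < 2*m \<Longrightarrow> (k = 2*m-1 \<and> sc k = 0) \<or> (k + 1 < 2*m \<and> sc k = Suc k)"
  unfolding sc_def by auto

lemma Ap_nn: assumes "NN a b" "k < 2*m" shows "0 \<le> Ap a b k"
  using sc_cases[OF assms(2)]
proof
  assume "k = 2*m-1 \<and> sc k = 0"
  then show ?thesis using lam_bounds[OF assms] m3 unfolding Ap_def by auto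
next
  assume "k + 1 < 2*m \<and> sc k = Suc k"
  moreover have "lam a b (Suc k) \<le> a k - lam a b k"
    unfolding lam_Suc' by (meson min.cobounded1 min.cobounded2 order_trans)
  ultimately show ?thesis unfolding Ap_def by auto
qed

lemma Bp_nn: "NN a b \<Longrightarrow> k < 2*m \<Longrightarrow> 0 \<le> Bp a b k"
  using lam_bounds unfolding Bp_def by force

lemma NN_ApBp: "NN a b \<Longrightarrow> NN (Ap a b) (Bp a b)"
  using Ap_nn Bp_nn unfolding NN_def by blast

lemma Zc_ApBp: assumes nn: "NN a b" shows "Zc (Ap a b) (Bp a b)"
  unfolding Zc_def
proof (intro allI impI)
  fix j assume j: "j < 2*m"
  show "Ap a b (pr j) = 0 \<or> Ap a b j = 0 \<or> Bp a b j = 0"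
  proof (cases j)
    case 0
    have p: "pr j = 2*m-1" "sc (2*m-1) = 0" "sc 0 = 1" using 0 m3 by (auto simp: pr_def sc_def)
    have t: "lam a b 0 = b 0 \<or> lam a b 0 = a (2*m-1) \<or> lam a b 0 = a 0" by (simp add: min_def lam_0')
    have A1: "0 \<le> Ap a b (2*m-1)" "0 \<le> Ap a b 0" using Ap_nn[OF nn] m3 by auto
    have L1: "0 \<le> lam a b (2*m-1)" "0 \<le> lam a b 1" using lam_nn[OF nn, of "2*m-1"] lam_nn[OF nn, of 1] m3 by auto
    show ?thesis using t
    proof (elim disjE)
      assume "lam a b 0 = b 0" then show ?thesis using 0 by (simp add: Bp_def)
    next
      assume e: "lam a b 0 = a (2*m-1)"
      have "Ap a b (2*m-1) = - lam a b (2*m-1)" unfolding Ap_def p(2) using e by simp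
      then show ?thesis using A1 L1 p(1) by simp
    next
      assume e: "lam a b 0 = a 0"
      have "Ap a b 0 = - lam a b 1" unfolding Ap_def p(3) using e by simp
      then show ?thesis using A1 L1 0 by simp
    qed
  next
    case (Suc i)
    have p: "pr j = i" "sc i = j" using Suc j by (auto simp: pr_def sc_def)
    have t: "lam a b j = b j \<or> lam a b j = a i - lam a b i \<or>
          lam a b j = a j - (if j = 2*m-1 then lam a b 0 else 0)" using Suc by (simp add: min_def lam_Suc')
    have A0: "0 \<le> Ap a b j" using Ap_nn[OF nn j] .
    have L0: "0 \<le> lam a b (sc j)" using lam_nn[OF nn] sc_lt[OF j] by auto
    show ?thesis using t
    proof (elim disjE)
      assume "lam a b j = b j" then show ?thesis by (simp add: Bp_def)
    next
      assume "lam a b j = a i - lam a b i" then show ?thesis by (simp add: Ap_def p)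
    next
      assume e: "lam a b j = a j - (if j = 2*m-1 then lam a b 0 else 0)"
      show ?thesis
      proof (cases "j = 2*m-1")
        case True
        then have "sc j = 0" using m3 by (simp add: sc_def)
        then show ?thesis using e True by (simp add: Ap_def)
      next
        case False
        then have "Ap a b j = - lam a b (sc j)" using e by (simp add: Ap_def)
        then show ?thesis using A0 L0 by simp
      qed
    qed
  qed
qed

lemma phi_ApBp: "phi (Ap a b) (Bp a b) = phi a b"
  unfolding phi_def Ap_def Bp_def by auto

lemma lam_zero0: assumes "NN a b" "Zc a b" shows "lam a b 0 = 0"
proof -
  have "pr 0 = 2*m-1" by (simp add: pr_def)
  moreover have "a (2*m-1) = 0 \<or> a 0 = 0 \<or> b 0 = 0" using assms(2) m3 calculation unfolding Zc_def
    by (metis gr0I mult_is_0 zero_neq_numeral le_zero_eq numeral_le_iff semiring_norm(68) zero_less_numeral)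
  moreover have "0 \<le> a (2*m-1)" "0 \<le> a 0" "0 \<le> b 0" using assms(1) m3 unfolding NN_def by auto
  ultimately show ?thesis unfolding lam_0' by (auto simp: min_def)
qed

lemma lam_zero: assumes "NN a b" "Zc a b" shows "j < 2*m \<Longrightarrow> lam a b j = 0"
proof (induction j)
  case 0
  show ?case using lam_zero0[OF assms] .
next
  case (Suc j)
  have "pr (Suc j) = j" by (simp add: pr_def)
  then have z: "a j = 0 \<or> a (Suc j) = 0 \<or> b (Suc j) = 0" using assms(2) Suc.prems unfolding Zc_def
    by metis
  have n: "0 \<le> a j" "0 \<le> a (Suc j)" "0 \<le> b (Suc j)" using assms(1) Suc.prems unfolding NN_def by auto
  have l: "lam a b j = 0" "lam a b 0 = 0" using Suc lam_zero0[OF assms] by auto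
  show ?case unfolding lam_Suc' using z n l by (auto simp: min_def)
qed

lemma Ap_id: "NN a b \<Longrightarrow> Zc a b \<Longrightarrow> k < 2*m \<Longrightarrow> Ap a b k = a k"
  unfolding Ap_def using lam_zero sc_lt by auto

lemma Bp_id: "NN a b \<Longrightarrow> Zc a b \<Longrightarrow> k < 2*m \<Longrightarrow> Bp a b k = b k"
  unfolding Bp_def using lam_zero by auto

end


context wc
begin

definition Ssum where "Ssum a b = (\<Sum>k<2*m. Ap a b k + Bp a b k)"
definition rho where "rho a b = mk (\<lambda>k. Ap a b k / Ssum a b) (\<lambda>k. Bp a b k / Ssum a b)"
definition PN :: "(nat \<Rightarrow> real) \<Rightarrow> (nat \<Rightarrow> real) \<Rightarrow> bool" where
  "PN a b \<longleftrightarrow> (\<exists>k<2*m. phi a b k \<noteq> 0)"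

lemma Ssum_pos: assumes nn: "NN a b" and pn: "PN a b" shows "0 < Ssum a b"
proof -
  have t: "\<And>k. k \<in> {..<2*m} \<Longrightarrow> 0 \<le> Ap a b k + Bp a b k"
    using Ap_nn[OF nn] Bp_nn[OF nn] by (simp add: add_nonneg_nonneg)
  have ge: "0 \<le> Ssum a b" unfolding Ssum_def by (rule sum_nonneg) (use t in auto)
  show ?thesis
  proof (rule ccontr)
    assume "\<not> 0 < Ssum a b"
    then have "Ssum a b = 0" using ge by simp
    then have z: "\<forall>k\<in>{..<2*m}. Ap a b k + Bp a b k = 0"
      unfolding Ssum_def by (subst (asm) sum_nonneg_eq_0_iff) (use t in auto)
    have z2: "k < 2*m \<Longrightarrow> Ap a b k = 0 \<and> Bp a b k = 0" for k
      using z Ap_nn[OF nn, of k] Bp_nn[OF nn, of k] by force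
    obtain k where k: "k < 2*m" "phi a b k \<noteq> 0" using pn unfolding PN_def by auto
    have "phi (Ap a b) (Bp a b) k = 0" unfolding phi_def using z2[OF k(1)] z2[OF sc_lt[OF k(1)]] by simp
    then show False using k phi_ApBp by simp
  qed
qed

lemma NN_div: "NN a b \<Longrightarrow> 0 < c \<Longrightarrow> NN (\<lambda>k. a k / c) (\<lambda>k. b k / c)"
  unfolding NN_def by auto

lemma Zc_div: "Zc a b \<Longrightarrow> Zc (\<lambda>k. a k / c) (\<lambda>k. b k / c)"
  unfolding Zc_def by auto

lemma rho_in: assumes nn: "NN a b" and pn: "PN a b" shows "inK (rho a b)"
proof -
  have S: "0 < Ssum a b" using Ssum_pos[OF nn pn] .
  have "(\<Sum>k<2*m. Ap a b k / Ssum a b + Bp a b k / Ssum a b) = (\<Sum>k<2*m. (Ap a b k + Bp a b k) / Ssum a b)"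
    by (simp add: add_divide_distrib)
  also have "\<dots> = Ssum a b / Ssum a b"
    unfolding Ssum_def by (rule sum_divide_distrib[symmetric])
  finally have "(\<Sum>k<2*m. Ap a b k / Ssum a b + Bp a b k / Ssum a b) = Ssum a b / Ssum a b" .
  then have "(\<Sum>k<2*m. Ap a b k / Ssum a b + Bp a b k / Ssum a b) = 1" using S by simp
  then show ?thesis unfolding rho_def inK_mk
    using NN_div[OF NN_ApBp[OF nn] S] Zc_div[OF Zc_ApBp[OF nn]] by blast
qed

lemma mk_cong: "(\<And>k. k < 2*m \<Longrightarrow> a k = a' k) \<Longrightarrow> (\<And>k. k < 2*m \<Longrightarrow> b k = b' k) \<Longrightarrow> mk a b = mk a' b'"
proof (rule ext)
  fix e
  assume h: "\<And>k. k < 2*m \<Longrightarrow> a k = a' k" "\<And>k. k < 2*m \<Longrightarrow> b k = b' k"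
  from mk_cases[of e] show "mk a b e = mk a' b' e"
  proof (elim disjE exE conjE)
    fix k assume "k < 2*m" "\<forall>a b. mk a b e = a k" then show ?thesis using h by simp
  next
    fix k assume "k < 2*m" "\<forall>a b. mk a b e = b k" then show ?thesis using h by simp
  next
    assume "\<forall>a b. mk a b e = 0" then show ?thesis by simp
  qed
qed

lemma rho_id: assumes f: "inK f" shows "rho (\<lambda>k. f (cE k)) (\<lambda>k. f (wE k)) = f"
proof -
  let ?a = "\<lambda>k. f (cE k)" and ?b = "\<lambda>k. f (wE k)"
  have c: "NN ?a ?b" "(\<Sum>k<2*m. f (cE k) + f (wE k)) = 1" "Zc ?a ?b" using inK_coords[OF f] by auto
  have "Ssum ?a ?b = (\<Sum>k<2*m. f (cE k) + f (wE k))" unfolding Ssum_def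
    by (rule sum.cong) (use Ap_id[OF c(1) c(3)] Bp_id[OF c(1) c(3)] in auto)
  then have S: "Ssum ?a ?b = 1" using c(2) by simp
  have "rho ?a ?b = mk ?a ?b" unfolding rho_def S
    by (rule mk_cong) (use Ap_id[OF c(1) c(3)] Bp_id[OF c(1) c(3)] in auto)
  then show ?thesis using inK_eq_mk[OF f] by simp
qed

lemma phi_rho: assumes nn: "NN a b" and pn: "PN a b"
  shows "phi (\<lambda>k. rho a b (cE k)) (\<lambda>k. rho a b (wE k)) k = phi a b k / Ssum a b"
proof (cases "k < 2*m")
  case True
  have "phi (\<lambda>k. rho a b (cE k)) (\<lambda>k. rho a b (wE k)) k = phi (Ap a b) (Bp a b) k / Ssum a b"
    unfolding phi_def rho_def using True sc_lt[OF True] by (simp add: mk_cE mk_wE diff_divide_distrib)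
  then show ?thesis by (simp add: phi_ApBp)
qed (simp add: phi_def)

lemma PN_inK: assumes f: "inK f" shows "PN (\<lambda>k. f (cE k)) (\<lambda>k. f (wE k))"
proof (rule ccontr)
  let ?a = "\<lambda>k. f (cE k)" and ?b = "\<lambda>k. f (wE k)"
  have c: "NN ?a ?b" "(\<Sum>k<2*m. f (cE k) + f (wE k)) = 1" "Zc ?a ?b" using inK_coords[OF f] by auto
  assume "\<not> PN ?a ?b"
  then have e: "k < 2*m \<Longrightarrow> ?a k = ?b k + ?b (sc k)" for k unfolding PN_def phi_def by auto
  have b0: "?b j = 0" if j: "j < 2*m" for j
  proof (rule ccontr)
    assume "?b j \<noteq> 0"
    moreover have "0 \<le> ?b j" using c(1) j unfolding NN_def by blast
    ultimately have bp: "?b j > 0" by linarith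
    have n1: "0 \<le> ?b (sc j)" using c(1) sc_lt[OF j] unfolding NN_def by blast
    have n2: "0 \<le> ?b (pr j)" using c(1) pr_lt[OF j] unfolding NN_def by blast
    have "?a j \<ge> ?b j" using e[OF j] n1 by linarith
    moreover have "?a (pr j) = ?b (pr j) + ?b j" using e[OF pr_lt[OF j]] sc_pr[OF j] by simp
    then have "?a (pr j) \<ge> ?b j" using n2 by linarith
    moreover have z: "?a (pr j) = 0 \<or> ?a j = 0 \<or> ?b j = 0" using c(3) j unfolding Zc_def by blast
    ultimately show False using bp by linarith
  qed
  have a0: "?a k = 0" if "k < 2*m" for k using e[OF that] b0[OF that] b0[OF sc_lt[OF that]] by simp
  have "(\<Sum>k<2*m. f (cE k) + f (wE k)) = 0" by (rule sum.neutral) (use a0 b0 in auto)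
  then show False using c(2) by simp
qed

end


context wc
begin

lemma cont_proj_XX: "continuous_map XX euclideanreal (\<lambda>f. f e)"
  unfolding XX_def geometric_realization_def
  by (intro continuous_map_from_subtopology continuous_map_product_projection) simp

lemma cont_lam:
  assumes ca: "\<And>k. k < 2*m \<Longrightarrow> continuous_map Z euclideanreal (\<lambda>z. a z k)"
      and cb: "\<And>k. k < 2*m \<Longrightarrow> continuous_map Z euclideanreal (\<lambda>z. b z k)"
  shows "j < 2*m \<Longrightarrow> continuous_map Z euclideanreal (\<lambda>z. lam (a z) (b z) j)"
proof (induction j)
  case 0
  show ?case unfolding lam_0' using m3
    by (intro continuous_map_real_min ca cb) auto
next
  case (Suc j)
  have l0: "continuous_map Z euclideanreal (\<lambda>z. lam (a z) (b z) 0)"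
    unfolding lam_0' using m3 by (intro continuous_map_real_min ca cb) auto
  have lj: "continuous_map Z euclideanreal (\<lambda>z. lam (a z) (b z) j)" using Suc by simp
  show ?case
  proof (cases "Suc j = 2*m-1")
    case True
    then show ?thesis unfolding lam_Suc' using Suc.prems
      by (simp only: if_True) (intro continuous_map_real_min continuous_map_diff ca cb l0 lj; simp add: l0)
  next
    case False
    then show ?thesis unfolding lam_Suc' using Suc.prems
      by (simp only: if_False) (intro continuous_map_real_min continuous_map_diff ca cb lj continuous_map_canonical_const; simp)
  qed
qed

lemma cont_rho:
  assumes ca: "\<And>k. k < 2*m \<Longrightarrow> continuous_map Z euclideanreal (\<lambda>z. a z k)"
      and cb: "\<And>k. k < 2*m \<Longrightarrow> continuous_map Z euclideanreal (\<lambda>z. b z k)"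
      and nn: "\<And>z. z \<in> topspace Z \<Longrightarrow> NN (a z) (b z)"
      and pn: "\<And>z. z \<in> topspace Z \<Longrightarrow> PN (a z) (b z)"
  shows "continuous_map Z XX (\<lambda>z. rho (a z) (b z))"
proof -
  note cl = cont_lam[OF ca cb]
  have cAp: "continuous_map Z euclideanreal (\<lambda>z. Ap (a z) (b z) k)" if "k < 2*m" for k
    unfolding Ap_def using that sc_lt[OF that] by (intro continuous_map_diff ca cl)
  have cBp: "continuous_map Z euclideanreal (\<lambda>z. Bp (a z) (b z) k)" if "k < 2*m" for k
    unfolding Bp_def using that by (intro continuous_map_diff cb cl)
  have cS: "continuous_map Z euclideanreal (\<lambda>z. Ssum (a z) (b z))"
    unfolding Ssum_def by (intro continuous_map_sum continuous_map_add cAp cBp) auto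
  have Sn: "z \<in> topspace Z \<Longrightarrow> Ssum (a z) (b z) \<noteq> 0" for z
    using Ssum_pos[OF nn pn] by force
  have ce: "continuous_map Z euclideanreal (\<lambda>z. rho (a z) (b z) e)" for e
  proof -
    from mk_cases[of e] show ?thesis
    proof (elim disjE exE conjE)
      fix k assume k: "k < 2*m" "\<forall>a b. mk a b e = a k"
      then show ?thesis unfolding rho_def
        by (simp only:) (intro continuous_map_real_divide cAp cS Sn k(1))
    next
      fix k assume k: "k < 2*m" "\<forall>a b. mk a b e = b k"
      then show ?thesis unfolding rho_def
        by (simp only:) (intro continuous_map_real_divide cBp cS Sn k(1))
    next
      assume "\<forall>a b. mk a b e = 0"
      then show ?thesis unfolding rho_def by simp
    qed
  qed
  have "continuous_map Z (powertop_real UNIV) (\<lambda>z. rho (a z) (b z))"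
    unfolding continuous_map_componentwise_UNIV using ce by simp
  moreover have "rho (a z) (b z) \<in> topspace XX" if "z \<in> topspace Z" for z
    using rho_in[OF nn[OF that] pn[OF that]] topspace_XX_iff by simp
  ultimately show ?thesis
    unfolding XX_def geometric_realization_def continuous_map_in_subtopology
    using topspace_XX unfolding XX_def geometric_realization_def by auto
qed

end


context wc
begin

definition nrm :: "(nat \<Rightarrow> real) \<Rightarrow> nat \<Rightarrow> real" where
  "nrm v = (\<lambda>k. v k / sqrt (\<Sum>i<2*m. (v i)^2))"
definition rr where "rr f = nrm (phi (\<lambda>k. f (cE k)) (\<lambda>k. f (wE k)))"
definition s0a :: "(nat \<Rightarrow> real) \<Rightarrow> nat \<Rightarrow> real" where
  "s0a u k = max 0 (u k) + max 0 (- u (sc k))"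
definition s0b :: "(nat \<Rightarrow> real) \<Rightarrow> nat \<Rightarrow> real" where
  "s0b u k = max 0 (- u k)"
definition ss where "ss u = rho (s0a u) (s0b u)"

lemma atMost_eq: "{..2*m-1} = {..<2*m}" using m3 by auto

lemma topspace_sphere: "u \<in> topspace (nsphere (2*m-1)) \<longleftrightarrow> (\<Sum>i<2*m. (u i)^2) = 1 \<and> (\<forall>i\<ge>2*m. u i = 0)"
proof -
  have i: "\<And>i. 2*m-1 < i \<longleftrightarrow> 2*m \<le> i" using m3 by arith
  have "(\<forall>i>2*m-1. u i = 0) \<longleftrightarrow> (\<forall>i\<ge>2*m. u i = 0)" by (simp only: i)
  then show ?thesis unfolding nsphere atMost_eq by simp
qed

lemma sumsq_pos: "PN a b \<Longrightarrow> 0 < (\<Sum>i<2*m. (phi a b i)^2)"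
proof -
  assume "PN a b"
  then obtain k where k: "k < 2*m" "phi a b k \<noteq> 0" unfolding PN_def by auto
  have "(phi a b k)^2 \<le> (\<Sum>i<2*m. (phi a b i)^2)"
    by (rule member_le_sum) (use k in auto)
  moreover have "0 < (phi a b k)^2" using k by simp
  ultimately show ?thesis by linarith
qed

lemma phi_out: "k \<ge> 2*m \<Longrightarrow> phi a b k = 0" unfolding phi_def by simp

lemma nrm_sphere: assumes "\<forall>i\<ge>2*m. v i = 0" "0 < (\<Sum>i<2*m. (v i)^2)"
  shows "nrm v \<in> topspace (nsphere (2*m-1))"
proof -
  let ?Q = "\<Sum>i<2*m. (v i)^2"
  have "(\<Sum>i<2*m. (nrm v i)^2) = (\<Sum>i<2*m. (v i)^2 / ?Q)"
    unfolding nrm_def using assms(2) by (simp add: power_divide)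
  also have "\<dots> = ?Q / ?Q" by (rule sum_divide_distrib[symmetric])
  also have "\<dots> = 1" using assms(2) by simp
  finally show ?thesis unfolding topspace_sphere using assms(1) by (simp add: nrm_def)
qed

lemma nrm_scale: "0 < c \<Longrightarrow> nrm (\<lambda>k. v k / c) = nrm v"
proof -
  assume c: "0 < c"
  have "(\<Sum>i<2*m. (v i / c)^2) = (\<Sum>i<2*m. (v i)^2) / c^2"
    by (simp add: power_divide sum_divide_distrib)
  then have "sqrt (\<Sum>i<2*m. (v i / c)^2) = sqrt (\<Sum>i<2*m. (v i)^2) / c"
    using c by (simp add: real_sqrt_divide)
  then show ?thesis unfolding nrm_def using c by (auto intro!: ext)
qed

lemma nrm_id: "u \<in> topspace (nsphere (2*m-1)) \<Longrightarrow> nrm u = u"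
  unfolding topspace_sphere nrm_def by auto

lemma phi_s0: "k < 2*m \<Longrightarrow> phi (s0a u) (s0b u) k = u k"
  unfolding phi_def s0a_def s0b_def by (simp add: max_def)

lemma phi_lin: "phi (\<lambda>k. x * a k + y * a' k) (\<lambda>k. x * b k + y * b' k) k = x * phi a b k + y * phi a' b' k"
  unfolding phi_def by (simp add: algebra_simps)

lemma rr_in: "f \<in> topspace XX \<Longrightarrow> rr f \<in> topspace (nsphere (2*m-1))"
proof -
  assume "f \<in> topspace XX"
  then have "PN (\<lambda>k. f (cE k)) (\<lambda>k. f (wE k))" using topspace_XX_iff PN_inK by blast
  then show ?thesis unfolding rr_def by (intro nrm_sphere sumsq_pos) (auto simp: phi_out)
qed

lemma cont_phi_XX: "continuous_map XX euclideanreal (\<lambda>f. phi (\<lambda>k. f (cE k)) (\<lambda>k. f (wE k)) k)"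
  unfolding phi_def by (cases "k < 2*m") (simp_all, intro continuous_map_diff cont_proj_XX)

lemma cont_rr: "continuous_map XX (nsphere (2*m-1)) rr"
proof -
  have nz: "f \<in> topspace XX \<Longrightarrow> sqrt (\<Sum>i<2*m. (phi (\<lambda>k. f (cE k)) (\<lambda>k. f (wE k)) i)^2) \<noteq> 0" for f
  proof -
    assume "f \<in> topspace XX"
    then have "0 < (\<Sum>i<2*m. (phi (\<lambda>k. f (cE k)) (\<lambda>k. f (wE k)) i)^2)"
      using topspace_XX_iff PN_inK sumsq_pos by blast
    then show ?thesis by simp
  qed
  have "continuous_map XX euclideanreal (\<lambda>f. rr f k)" for k
    unfolding rr_def nrm_def
    by (intro continuous_map_real_divide continuous_map_sqrt continuous_map_sum continuous_map_real_pow cont_phi_XX nz) auto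
  then have "continuous_map XX (powertop_real UNIV) rr"
    unfolding continuous_map_componentwise_UNIV by simp
  moreover have "rr ` topspace XX \<subseteq> topspace (nsphere (2*m-1))" using rr_in by auto
  ultimately show ?thesis by (simp add: nsphere continuous_map_in_subtopology image_subset_iff_funcset)
qed

lemma cont_rr_coord: "continuous_map XX euclideanreal (\<lambda>f. rr f k)"
  using continuous_map_compose[OF cont_rr continuous_map_nsphere_projection[of _ k]] by (simp add: o_def)

lemma NN_s0: "NN (s0a u) (s0b u)"
  unfolding NN_def s0a_def s0b_def by simp

lemma PN_s0: assumes "u \<in> topspace (nsphere (2*m-1))" shows "PN (s0a u) (s0b u)"
proof (rule ccontr)
  assume "\<not> PN (s0a u) (s0b u)"
  then have "k < 2*m \<Longrightarrow> u k = 0" for k using phi_s0 unfolding PN_def by force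
  then have "(\<Sum>i<2*m. (u i)^2) = 0" by simp
  then show False using assms unfolding topspace_sphere by simp
qed

lemma cont_ss: "continuous_map (nsphere (2*m-1)) XX ss"
  unfolding ss_def
proof (rule cont_rho)
  fix k
  show "continuous_map (nsphere (2*m-1)) euclideanreal (\<lambda>z. s0a z k)"
    unfolding s0a_def by (intro continuous_map_add continuous_map_real_max continuous_map_minus
        continuous_map_nsphere_projection continuous_map_canonical_const)
  show "continuous_map (nsphere (2*m-1)) euclideanreal (\<lambda>z. s0b z k)"
    unfolding s0b_def by (intro continuous_map_real_max continuous_map_minus
        continuous_map_nsphere_projection continuous_map_canonical_const)
qed (auto simp: NN_s0 PN_s0)

lemma rr_ss: assumes u: "u \<in> topspace (nsphere (2*m-1))" shows "rr (ss u) = u"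
proof -
  let ?a = "s0a u" and ?b = "s0b u"
  have "phi (\<lambda>k. ss u (cE k)) (\<lambda>k. ss u (wE k)) = (\<lambda>k. phi ?a ?b k / Ssum ?a ?b)"
    unfolding ss_def using phi_rho[OF NN_s0 PN_s0[OF u]] by auto
  then have "rr (ss u) = nrm (phi ?a ?b)"
    unfolding rr_def using nrm_scale Ssum_pos[OF NN_s0 PN_s0[OF u]] by simp
  also have "phi ?a ?b = u"
  proof
    fix k show "phi ?a ?b k = u k"
      using phi_s0[of k u] phi_out[of k] u unfolding topspace_sphere by (cases "k < 2*m") auto
  qed
  finally show ?thesis using nrm_id[OF u] by simp
qed

definition hh where
  "hh z = rho (\<lambda>k. fst z * snd z (cE k) + (1 - fst z) * s0a (rr (snd z)) k)
              (\<lambda>k. fst z * snd z (wE k) + (1 - fst z) * s0b (rr (snd z)) k)"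

lemma cont_hh: "continuous_map (prod_topology (top_of_set {0..1}) XX) XX hh"
  unfolding hh_def
proof (rule cont_rho)
  let ?Z = "prod_topology (top_of_set {0..1::real}) XX"
  have cf: "continuous_map ?Z euclideanreal fst"
    using continuous_map_into_fulltopology[OF continuous_map_fst] .
  have cp: "continuous_map ?Z euclideanreal (\<lambda>z. snd z e)" for e
    using continuous_map_compose[OF continuous_map_snd cont_proj_XX] by (simp add: o_def)
  have cr: "continuous_map ?Z euclideanreal (\<lambda>z. rr (snd z) k)" for k
    using continuous_map_compose[OF continuous_map_snd cont_rr_coord] by (simp add: o_def)
  fix k
  show "continuous_map ?Z euclideanreal (\<lambda>z. fst z * snd z (cE k) + (1 - fst z) * s0a (rr (snd z)) k)"
    unfolding s0a_def by (intro continuous_map_add continuous_map_real_mult continuous_map_diff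
         continuous_map_real_max continuous_map_minus cf cp cr continuous_map_canonical_const)
  show "continuous_map ?Z euclideanreal (\<lambda>z. fst z * snd z (wE k) + (1 - fst z) * s0b (rr (snd z)) k)"
    unfolding s0b_def by (intro continuous_map_add continuous_map_real_mult continuous_map_diff
         continuous_map_real_max continuous_map_minus cf cp cr continuous_map_canonical_const)
next
  fix z assume z: "z \<in> topspace (prod_topology (top_of_set {0..1::real}) XX)"
  then obtain t f where tf: "z = (t, f)" "0 \<le> t" "t \<le> 1" "f \<in> topspace XX" by auto
  have kf: "inK f" using tf topspace_XX_iff by simp
  have nnf: "NN (\<lambda>k. f (cE k)) (\<lambda>k. f (wE k))" using inK_coords[OF kf] by simp
  show "NN (\<lambda>k. fst z * snd z (cE k) + (1 - fst z) * s0a (rr (snd z)) k)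
           (\<lambda>k. fst z * snd z (wE k) + (1 - fst z) * s0b (rr (snd z)) k)"
    using nnf NN_s0[of "rr f"] tf unfolding NN_def by (simp add: add_nonneg_nonneg)
  let ?p = "phi (\<lambda>k. f (cE k)) (\<lambda>k. f (wE k))"
  let ?Q = "sqrt (\<Sum>i<2*m. (?p i)^2)"
  have Q: "0 < ?Q" using sumsq_pos[OF PN_inK[OF kf]] by simp
  obtain k where k: "k < 2*m" "?p k \<noteq> 0" using PN_inK[OF kf] unfolding PN_def by auto
  have "phi (\<lambda>k. t * f (cE k) + (1 - t) * s0a (rr f) k) (\<lambda>k. t * f (wE k) + (1 - t) * s0b (rr f) k) k
        = t * ?p k + (1 - t) * rr f k"
    using phi_lin[of t _ "1 - t"] phi_s0[OF k(1)] by simp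
  also have "\<dots> = (t + (1 - t) / ?Q) * ?p k"
    unfolding rr_def nrm_def by (simp add: algebra_simps)
  finally have e: "phi (\<lambda>k. t * f (cE k) + (1 - t) * s0a (rr f) k) (\<lambda>k. t * f (wE k) + (1 - t) * s0b (rr f) k) k
        = (t + (1 - t) / ?Q) * ?p k" .
  have "0 < t + (1 - t) / ?Q"
  proof (cases "t = 1")
    case False
    then have "0 < (1 - t) / ?Q" using tf Q by simp
    then show ?thesis using tf by linarith
  qed simp
  then show "PN (\<lambda>k. fst z * snd z (cE k) + (1 - fst z) * s0a (rr (snd z)) k)
           (\<lambda>k. fst z * snd z (wE k) + (1 - fst z) * s0b (rr (snd z)) k)"
    unfolding PN_def using e k tf by auto
qed

lemma main: "XX homotopy_equivalent_space nsphere (2*m-1)"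
proof (rule deformation_retraction_imp_homotopy_equivalent_space)
  show "retraction_maps XX (nsphere (2*m-1)) rr ss"
    unfolding retraction_maps_def using cont_rr cont_ss rr_ss by blast
  show "homotopic_with (\<lambda>x. True) XX XX (ss \<circ> rr) id"
  proof (subst homotopic_with)
    show "\<And>h k. (\<And>x. x \<in> topspace XX \<Longrightarrow> h x = k x) \<Longrightarrow> True = True" by simp
  next
    show "\<exists>h. continuous_map (prod_topology (top_of_set {0..1::real}) XX) XX h \<and>
        (\<forall>x\<in>topspace XX. h (0, x) = (ss \<circ> rr) x) \<and>
        (\<forall>x\<in>topspace XX. h (1, x) = id x) \<and> (\<forall>t\<in>{0..1}. True)"
  proof (intro exI conjI ballI)
    show "continuous_map (prod_topology (top_of_set {0..1::real}) XX) XX hh" by (rule cont_hh)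
    fix x assume x: "x \<in> topspace XX"
    show "hh (0, x) = (ss \<circ> rr) x" unfolding hh_def ss_def by simp
    have "inK x" using x topspace_XX_iff by simp
    then show "hh (1, x) = id x" unfolding hh_def using rho_id by simp
  qed simp
  qed
qed

end

theorem mainTheorem8:
  fixes m :: nat
  assumes "m \<ge> 3"
  shows "geometric_realization (two_matching_complex (whiskered_cycle_edges m))
           homotopy_equivalent_space nsphere (2 * m - 1)"
proof -
  interpret wc m using assms by unfold_locales
  show ?thesis using main unfolding XX_def VV_def .
qed

end
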